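(* For each $c>0$ let $\alpha_c,\beta_c,\gamma:\mathbb{R}^n\times\mathbb{S}^m\to\mathbb{R}$ satisfy conditions (a)–(e) below, and let $\mathcal{A}_c(x,\Lambda):=f(x)+\alpha_c(x,\Lambda)\,\varphi(G(x),\beta_c(x,\Lambda)\Lambda)+\gamma(x,\Lambda)$ with $\varphi(Y,Z)=\|P(Z/2-Y)\|_F^2-\|Z\|_F^2/4$. Conditions: (a) $\alpha_c,\beta_c,\gamma$ are continuously differentiable for all $c>0$; (b) $\alpha_c(x,\Lambda)>0$ for all $x$ feasible for (NSDP), all $\Lambda$, all $c>0$; and for every KKT pair $(\bar x,\bar\Lambda)$ of (NSDP): (c) $\alpha_c(\bar x,\bar\Lambda)\beta_c(\bar x,\bar\Lambda)=1$ for all $c>0$; (d) $\gamma(\bar x,\bar\Lambda)=0$, $\nabla_x\gamma(\bar x,\bar\Lambda)=0$, $\nabla_\Lambda\gamma(\bar x,\bar\Lambda)=0$; (e) there exist neighborhoods $V_{\bar x}$, $V_{\bar\Lambda}$ of $\bar x,\bar\Lambda$ and a continuous $\Gamma:V_{\bar x}\to V_{\bar\Lambda}$ with $\Gamma(\bar x)=\bar\Lambda$ and $\gamma(x,\Gamma(x))=0$ for all $x\in V_{\bar x}$. Assume moreover that $G_{\mathrm{NSDP}}\neq\emptyset$, that $G_{\mathrm{NLP}}(c)\neq\emptyset$ for all $c>0$, and that for every $x\in G_{\mathrm{NSDP}}$ there is at least one $\Lambda\in\mathbb{S}^m$ such that $(x,\Lambda)$ is a KKT pair of (NSDP). Then for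 every $c>0$, $G_{\mathrm{NLP}}(c)\subseteq\tilde G_{\mathrm{NSDP}}$ implies $G_{\mathrm{NLP}}(c)=\tilde G_{\mathrm{NSDP}}$.
   Context: $\mathbb{S}^m$ is the space of real symmetric $m\times m$ matrices with inner product $\langle Y,Z\rangle=\operatorname{tr}(YZ)$ and Frobenius norm; $\mathbb{S}^m_+$ is the PSD cone and $P$ the orthogonal projection onto it. $f:\mathbb{R}^n\to\mathbb{R}$, $G:\mathbb{R}^n\to\mathbb{S}^m$ are twice continuously differentiable; (NSDP) is: minimize $f(x)$ s.t. $G(x)\in\mathbb{S}^m_+$. $\nabla G(x)^*Z=(\langle\partial G(x)/\partial x_i,Z\rangle)_{i=1}^n$; $L(x,\Lambda)=f(x)-\langle G(x),\Lambda\rangle$. With $Y\circ Z=(YZ+ZY)/2$, $(x,\Lambda)$ is a KKT pair of (NSDP) if $\nabla f(x)-\nabla G(x)^*\Lambda=0$, $\Lambda\circ G(x)=0$, $G(x)\in\mathbb{S}^m_+$, $\Lambda\in\mathbb{S}^m_+$; then $\Lambda$ is called a Lagrange multiplier corresponding to $x$. $G_{\mathrm{NSDP}}$ is the set of global minimizers of (NSDP); $G_{\mathrm{NLP}}(c)$ is the set of global minimizers of $\mathcal{A}_c$ over $\mathbb{R}^n\times\mathbb{S}^m$; $\tilde G_{\mathrm{NSDP}}:=\{(x,\Lambda): x\in G_{\mathrm{NSDP}}\text{ and }\Lambda\text{ is a corresponding Lagrange multiplier}\}$. *)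

theory Defs
  imports "HOL-Analysis.Analysis"
begin

text \<open>Real m x m matrices are modelled as real^'m^'m.  The library norm on this
type is the Frobenius norm and the library inner product is tr(Y^T Z), which equals
tr(YZ) on symmetric matrices.\<close>

definition Sym :: "(real^'m^'m) set" where
  "Sym = {A. transpose A = A}"

definition PSD :: "(real^'m^'m) set" where
  "PSD = {A. A \<in> Sym \<and> (\<forall>v. 0 \<le> v \<bullet> (A *v v))}"

definition projPSD :: "real^'m^'m \<Rightarrow> real^'m^'m" where
  "projPSD Y = closest_point PSD Y"

definition jordan :: "real^'m^'m \<Rightarrow> real^'m^'m \<Rightarrow> real^'m^'m" where
  "jordan Y Z = (1/2) *\<^sub>R (Y ** Z + Z ** Y)"

definition phi :: "real^'m^'m \<Rightarrow> real^'m^'m \<Rightarrow> real" where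
  "phi Y Z = (norm (projPSD ((1/2) *\<^sub>R Z - Y)))\<^sup>2 - (norm Z)\<^sup>2 / 4"

definition C2 :: "('a::real_normed_vector \<Rightarrow> 'b::real_normed_vector) \<Rightarrow> bool" where
  "C2 g \<longleftrightarrow> (\<exists>Dg D2g.
     (\<forall>x. (g has_derivative blinfun_apply (Dg x)) (at x)) \<and>
     (\<forall>x. (Dg has_derivative blinfun_apply (D2g x)) (at x)) \<and>
     continuous_on UNIV D2g)"

definition C1_within :: "'a::real_normed_vector set \<Rightarrow> ('a \<Rightarrow> 'b::real_normed_vector) \<Rightarrow> bool" where
  "C1_within S g \<longleftrightarrow> (\<exists>Dg.
     (\<forall>p\<in>S. (g has_derivative blinfun_apply (Dg p)) (at p within S)) \<and>
     continuous_on S Dg)"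

definition Dom :: "((real^'n) \<times> (real^'m^'m)) set" where
  "Dom = UNIV \<times> Sym"

definition KKT :: "(real^'n \<Rightarrow> real) \<Rightarrow> (real^'n \<Rightarrow> real^'m^'m) \<Rightarrow> real^'n \<Rightarrow> real^'m^'m \<Rightarrow> bool" where
  "KKT f G x L \<longleftrightarrow>
     (\<forall>i. frechet_derivative f (at x) (axis i 1) - (frechet_derivative G (at x) (axis i 1)) \<bullet> L = 0) \<and>
     jordan L (G x) = 0 \<and> G x \<in> PSD \<and> L \<in> PSD"

definition G_NSDP :: "(real^'n \<Rightarrow> real) \<Rightarrow> (real^'n \<Rightarrow> real^'m^'m) \<Rightarrow> (real^'n) set" where
  "G_NSDP f G = {x. G x \<in> PSD \<and> (\<forall>y. G y \<in> PSD \<longrightarrow> f x \<le> f y)}"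

definition tG_NSDP :: "(real^'n \<Rightarrow> real) \<Rightarrow> (real^'n \<Rightarrow> real^'m^'m) \<Rightarrow> ((real^'n) \<times> (real^'m^'m)) set" where
  "tG_NSDP f G = {(x, L). x \<in> G_NSDP f G \<and> KKT f G x L}"

definition Aug :: "(real^'n \<Rightarrow> real) \<Rightarrow> (real^'n \<Rightarrow> real^'m^'m) \<Rightarrow>
    ((real^'n) \<times> (real^'m^'m) \<Rightarrow> real) \<Rightarrow> ((real^'n) \<times> (real^'m^'m) \<Rightarrow> real) \<Rightarrow>
    ((real^'n) \<times> (real^'m^'m) \<Rightarrow> real) \<Rightarrow> (real^'n) \<times> (real^'m^'m) \<Rightarrow> real" where
  "Aug f G \<alpha> \<beta> \<gamma> p = f (fst p) + \<alpha> p * phi (G (fst p)) (\<beta> p *\<^sub>R snd p) + \<gamma> p"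

definition G_NLP :: "(real^'n \<Rightarrow> real) \<Rightarrow> (real^'n \<Rightarrow> real^'m^'m) \<Rightarrow>
    ((real^'n) \<times> (real^'m^'m) \<Rightarrow> real) \<Rightarrow> ((real^'n) \<times> (real^'m^'m) \<Rightarrow> real) \<Rightarrow>
    ((real^'n) \<times> (real^'m^'m) \<Rightarrow> real) \<Rightarrow> ((real^'n) \<times> (real^'m^'m)) set" where
  "G_NLP f G \<alpha> \<beta> \<gamma> = {p \<in> Dom. \<forall>q\<in>Dom. Aug f G \<alpha> \<beta> \<gamma> p \<le> Aug f G \<alpha> \<beta> \<gamma> q}"

end

theory Submission imports Defs begin

lemma ax_entry: "axis i 1 \<bullet> ((Y::real^'m^'m) *v axis j 1) = Y$i$j"
  by (simp add: matrix_vector_mult_basis inner_commute[of "axis i 1"] inner_axis column_def)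

lemma sym_entry: "Y \<in> Sym \<Longrightarrow> Y$i$j = Y$j$i"
proof -
  assume "Y \<in> Sym"
  then have "Finite_Cartesian_Product.transpose Y = Y" unfolding Sym_def by simp
  then have "(Finite_Cartesian_Product.transpose Y)$j$i = Y$j$i" by simp
  then show ?thesis by (simp add: Finite_Cartesian_Product.transpose_def)
qed

lemma sym_quad:
  fixes Y :: "real^'m^'m"
  assumes "Y \<in> Sym"
  shows "u \<bullet> (Y *v w) = w \<bullet> (Y *v u)"
proof -
  have tY: "Finite_Cartesian_Product.transpose Y = Y" using assms unfolding Sym_def by simp
  have "u \<bullet> (Y *v w) = (u v* Y) \<bullet> w" by (simp only: dot_lmul_matrix)
  also have "\<dots> = (Finite_Cartesian_Product.transpose Y *v u) \<bullet> w" by (simp only: transpose_matrix_vector)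
  also have "\<dots> = (Y *v u) \<bullet> w" by (simp only: tY)
  also have "\<dots> = w \<bullet> (Y *v u)" by (rule inner_commute)
  finally show ?thesis .
qed

lemma quad_expand:
  fixes Y :: "real^'m^'m"
  assumes "Y \<in> Sym"
  shows "(u + t *\<^sub>R w) \<bullet> (Y *v (u + t *\<^sub>R w)) =
     u \<bullet> (Y *v u) + 2 * t * (w \<bullet> (Y *v u)) + t^2 * (w \<bullet> (Y *v w))"
proof -
  have s: "u \<bullet> (Y *v w) = w \<bullet> (Y *v u)"
    by (rule sym_quad[OF assms])
  show ?thesis
    by (simp add: matrix_vector_right_distrib matrix_vector_mult_scaleR inner_add_left inner_add_right
        s power2_eq_square algebra_simps)
qed

lemma psd_diag: "Y \<in> PSD \<Longrightarrow> 0 \<le> Y$k$k"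
proof -
  assume "Y \<in> PSD"
  then have "0 \<le> axis k 1 \<bullet> (Y *v axis k 1)" unfolding PSD_def by blast
  then show ?thesis by (simp only: ax_entry)
qed

lemma psd_zero_diag:
  fixes Y :: "real^'m^'m"
  assumes Y: "Y \<in> PSD" and z: "Y$j$j = 0"
  shows "Y$i$j = 0"
proof (rule ccontr)
  assume ne: "Y$i$j \<noteq> 0"
  have sym: "Y \<in> Sym" using Y unfolding PSD_def by auto
  define t where "t = - (Y$i$i + 1) / (2 * Y$i$j)"
  have "0 \<le> (axis i 1 + t *\<^sub>R axis j 1) \<bullet> (Y *v (axis i 1 + t *\<^sub>R axis j 1))"
    using Y unfolding PSD_def by blast
  also have "\<dots> = Y$i$i + 2 * t * Y$j$i + t^2 * Y$j$j"
    by (simp only: quad_expand[OF sym] ax_entry)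
  also have "\<dots> = Y$i$i + 2 * t * Y$i$j" using z sym_entry[OF sym, of i j] by simp
  also have "\<dots> = -1" using ne by (simp add: t_def field_simps)
  finally show False by simp
qed

lemma outer_inner:
  fixes W :: "real^'m^'m" and y :: "real^'m"
  shows "(\<chi> i j. y$i * y$j) \<bullet> W = y \<bullet> (W *v y)"
  by (simp add: inner_vec_def matrix_vector_mult_def sum_distrib_left mult_ac)

lemma outer_mv:
  fixes y v :: "real^'m"
  shows "(\<chi> i j. y$i * y$j) *v v = (y \<bullet> v) *\<^sub>R y"
  by (simp add: vec_eq_iff inner_vec_def matrix_vector_mult_def sum_distrib_left mult_ac)

lemma psd_inner_aux:
  fixes Y W :: "real^'m^'m"
  shows "card {k. Y$k$k \<noteq> 0} = n \<Longrightarrow> Y \<in> PSD \<Longrightarrow> W \<in> PSD \<Longrightarrow> 0 \<le> Y \<bullet> W"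
proof (induction n arbitrary: Y rule: less_induct)
  case (less n)
  have Ys: "Y \<in> Sym" using less.prems unfolding PSD_def by auto
  show ?case
  proof (cases "\<exists>k. Y$k$k \<noteq> 0")
    case False
    then have "Y = 0" using psd_zero_diag[OF less.prems(2)] by (simp add: vec_eq_iff)
    then show ?thesis by simp
  next
    case True
    then obtain k where kk: "Y$k$k \<noteq> 0" by blast
    define d where "d = Y$k$k"
    have dpos: "d > 0" using psd_diag[OF less.prems(2), of k] kk d_def by simp
    define y where "y = (\<chi> i. Y$i$k)"
    define Om where "Om = (\<chi> i j. y$i * y$j)"
    define Y' where "Y' = Y - (1/d) *\<^sub>R Om"
    have Y'e: "Y'$i$j = Y$i$j - Y$i$k * Y$j$k / d" for i j
      by (simp add: Y'_def Om_def y_def)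
    have Y'sym: "Y' \<in> Sym"
    proof -
      have "Finite_Cartesian_Product.transpose Y' = Y'"
        using Y'e sym_entry[OF Ys] by (simp add: Finite_Cartesian_Product.transpose_def vec_eq_iff mult.commute)
      then show ?thesis unfolding Sym_def by simp
    qed
    have yv: "y \<bullet> v = axis k 1 \<bullet> (Y *v v)" for v
    proof -
      have "axis k 1 \<bullet> (Y *v v) = v \<bullet> (Y *v axis k 1)"
        by (rule sym_quad[OF Ys])
      also have "\<dots> = y \<bullet> v"
        by (simp add: matrix_vector_mult_basis inner_commute column_def y_def)
      finally show ?thesis by simp
    qed
    have Y'q: "v \<bullet> (Y' *v v) = w \<bullet> (Y *v w)" if "w = v + (- (y \<bullet> v) / d) *\<^sub>R axis k 1" for v w
    proof -
      have "v \<bullet> (Y' *v v) = v \<bullet> (Y *v v) - (y \<bullet> v)^2 / d"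
        by (simp add: Y'_def Om_def matrix_vector_mult_diff_rdistrib outer_mv
            scaleR_matrix_vector_assoc[symmetric] inner_diff_right power2_eq_square inner_commute)
      also have "\<dots> = w \<bullet> (Y *v w)"
        unfolding that quad_expand[OF Ys] using dpos
        by (simp add: ax_entry yv[symmetric] d_def[symmetric] power2_eq_square field_simps)
      finally show ?thesis .
    qed
    have Y'psd: "Y' \<in> PSD"
      unfolding PSD_def using Y'sym Y'q less.prems(2) unfolding PSD_def by auto
    have sub: "{j. Y'$j$j \<noteq> 0} \<subseteq> {j. Y$j$j \<noteq> 0} - {k}"
    proof
      fix j assume "j \<in> {j. Y'$j$j \<noteq> 0}"
      then have ne: "Y'$j$j \<noteq> 0" by simp
      have "j \<noteq> k" using ne Y'e[of k k] dpos d_def by (auto simp: power2_eq_square)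
      moreover have "Y$j$j \<noteq> 0"
      proof
        assume "Y$j$j = 0"
        then have "Y$k$j = 0" using psd_zero_diag[OF less.prems(2)] by blast
        then have "Y$j$k = 0" using sym_entry[OF Ys, of j k] by simp
        then show False using ne Y'e[of j j] \<open>Y$j$j = 0\<close> by simp
      qed
      ultimately show "j \<in> {j. Y$j$j \<noteq> 0} - {k}" by simp
    qed
    have "card {j. Y'$j$j \<noteq> 0} < n"
    proof -
      have "card {j. Y'$j$j \<noteq> 0} \<le> card ({j. Y$j$j \<noteq> 0} - {k})"
        by (rule card_mono[OF _ sub]) simp
      also have "\<dots> < n" using less.prems(1) kk card_Diff1_less[of "{j. Y$j$j \<noteq> 0}" k]
        by simp
      finally show ?thesis .
    qed
    then have IH: "0 \<le> Y' \<bullet> W" using less.IH Y'psd less.prems(3) by blast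
    have "Y = Y' + (1/d) *\<^sub>R Om" by (simp add: Y'_def)
    then have "Y \<bullet> W = Y' \<bullet> W + (1/d) * (y \<bullet> (W *v y))"
      by (simp add: inner_add_left Om_def outer_inner)
    moreover have "0 \<le> y \<bullet> (W *v y)" using less.prems(3) unfolding PSD_def by auto
    ultimately show ?thesis using IH dpos by simp
  qed
qed

lemma psd_inner: "Y \<in> PSD \<Longrightarrow> W \<in> PSD \<Longrightarrow> 0 \<le> (Y::real^'m^'m) \<bullet> W"
  using psd_inner_aux by blast


lemma jordan_inner:
  fixes L Y :: "real^'m^'m"
  assumes j: "jordan L Y = 0" and L: "L \<in> Sym" and Y: "Y \<in> Sym"
  shows "L \<bullet> Y = 0"
proof -
  have e: "(L ** Y + Y ** L)$i$i = 0" for i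
    using j unfolding jordan_def by (simp add: vec_eq_iff)
  have "(L ** Y + Y ** L)$i$i = 2 * (L$i \<bullet> Y$i)" for i
  proof -
    have "(L ** Y)$i$i = (\<Sum>k\<in>UNIV. L$i$k * Y$i$k)"
      by (simp add: matrix_matrix_mult_def sym_entry[OF Y, of _ i])
    moreover have "(Y ** L)$i$i = (\<Sum>k\<in>UNIV. L$i$k * Y$i$k)"
      by (simp add: matrix_matrix_mult_def sym_entry[OF L, of _ i] mult.commute)
    ultimately show ?thesis by (simp add: inner_vec_def)
  qed
  then have "L$i \<bullet> Y$i = 0" for i using e by simp
  then show ?thesis by (simp add: inner_vec_def)
qed

lemma psd_scale: "A \<in> PSD \<Longrightarrow> 0 \<le> c \<Longrightarrow> c *\<^sub>R (A::real^'m^'m) \<in> PSD"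
  unfolding PSD_def Sym_def
  by (auto simp: Finite_Cartesian_Product.transpose_def vec_eq_iff scaleR_matrix_vector_assoc[symmetric])

lemma proj_half:
  fixes Y Z :: "real^'m^'m"
  assumes Y: "Y \<in> PSD" and Z: "Z \<in> PSD" and o: "Y \<bullet> Z = 0"
  shows "projPSD ((1/2) *\<^sub>R Z - Y) = (1/2) *\<^sub>R Z"
proof -
  define A where "A = (1/2) *\<^sub>R Z - Y"
  define H where "H = (1/2) *\<^sub>R Z"
  have H: "H \<in> PSD" using psd_scale[OF Z] H_def by simp
  have key: "(dist A W)^2 \<ge> (norm Y)^2 + (norm (H - W))^2" if W: "W \<in> PSD" for W :: "real^'m^'m"
  proof -
    have "A - W = (H - W) - Y" by (simp add: A_def H_def)
    then have "(dist A W)^2 = (norm (H - W))^2 - 2 * ((H - W) \<bullet> Y) + (norm Y)^2"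
      by (simp add: dist_norm power2_norm_eq_inner inner_diff_left inner_diff_right inner_commute)
    moreover have "(H - W) \<bullet> Y = - (W \<bullet> Y)"
      using o by (simp add: H_def inner_diff_left inner_diff_right inner_commute[of Y])
    moreover have "0 \<le> W \<bullet> Y" using psd_inner[OF W Y] .
    ultimately show ?thesis by simp
  qed
  have dH: "dist A H = norm Y" by (simp add: A_def H_def dist_norm)
  have "projPSD A = H"
    unfolding projPSD_def closest_point_def
  proof (rule someI2[of _ H])
    show "H \<in> PSD \<and> (\<forall>y\<in>PSD. dist A H \<le> dist A y)"
    proof (intro conjI ballI H)
      fix W :: "real^'m^'m" assume "W \<in> PSD"
      then have "(norm Y)^2 \<le> (dist A W)^2" using key[of W] by (smt (verit) zero_le_power2)
      then have "norm Y \<le> dist A W" by (rule power2_le_imp_le) simp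
      then show "dist A H \<le> dist A W" using dH by simp
    qed
  next
    fix x :: "real^'m^'m" assume x: "x \<in> PSD \<and> (\<forall>y\<in>PSD. dist A x \<le> dist A y)"
    then have "dist A x \<le> norm Y" using H dH by metis
    then have "(dist A x)^2 \<le> (norm Y)^2" by (simp add: power_mono)
    with key[of x] x have "(norm (H - x))^2 \<le> 0" by linarith
    then show "x = H" by simp
  qed
  then show ?thesis by (simp add: A_def H_def)
qed

theorem lemma3p7:
  fixes f :: "real^'n \<Rightarrow> real"
    and G :: "real^'n \<Rightarrow> real^'m^'m"
    and \<alpha> \<beta> :: "real \<Rightarrow> (real^'n) \<times> (real^'m^'m) \<Rightarrow> real"
    and \<gamma> :: "(real^'n) \<times> (real^'m^'m) \<Rightarrow> real"
  assumes fC2: "C2 f" and GC2: "C2 G" and Gsym: "\<And>x. G x \<in> Sym"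
    and a: "\<And>c. c > 0 \<Longrightarrow> C1_within Dom (\<alpha> c) \<and> C1_within Dom (\<beta> c)"
    and a_gamma: "C1_within Dom \<gamma>"
    and b: "\<And>c x L. c > 0 \<Longrightarrow> G x \<in> PSD \<Longrightarrow> L \<in> Sym \<Longrightarrow> \<alpha> c (x, L) > 0"
    and c: "\<And>c xb Lb. KKT f G xb Lb \<Longrightarrow> c > 0 \<Longrightarrow> \<alpha> c (xb, Lb) * \<beta> c (xb, Lb) = 1"
    and d: "\<And>xb Lb. KKT f G xb Lb \<Longrightarrow>
              \<gamma> (xb, Lb) = 0 \<and> (\<gamma> has_derivative (\<lambda>_. 0)) (at (xb, Lb) within Dom)"
    and e: "\<And>xb Lb. KKT f G xb Lb \<Longrightarrow>
              \<exists>Vx VL \<Gamma>. open Vx \<and> xb \<in> Vx \<and> open VL \<and> Lb \<in> VL \<and>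
                 continuous_on Vx \<Gamma> \<and> \<Gamma> ` Vx \<subseteq> VL \<inter> Sym \<and> \<Gamma> xb = Lb \<and>
                 (\<forall>x\<in>Vx. \<gamma> (x, \<Gamma> x) = 0)"
    and ne1: "G_NSDP f G \<noteq> {}"
    and ne2: "\<And>c. c > 0 \<Longrightarrow> G_NLP f G (\<alpha> c) (\<beta> c) \<gamma> \<noteq> {}"
    and mult: "\<And>x. x \<in> G_NSDP f G \<Longrightarrow> \<exists>L. L \<in> Sym \<and> KKT f G x L"
  shows "\<forall>c>0. G_NLP f G (\<alpha> c) (\<beta> c) \<gamma> \<subseteq> tG_NSDP f G \<longrightarrow>
           G_NLP f G (\<alpha> c) (\<beta> c) \<gamma> = tG_NSDP f G"
proof (intro allI impI)
  fix c :: real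
  assume cpos: "c > 0" and sub: "G_NLP f G (\<alpha> c) (\<beta> c) \<gamma> \<subseteq> tG_NSDP f G"
  have val: "Aug f G (\<alpha> c) (\<beta> c) \<gamma> (x, L) = f x" if K: "KKT f G x L" for x L
  proof -
    have GP: "G x \<in> PSD" and LP: "L \<in> PSD" and jo: "jordan L (G x) = 0"
      using K unfolding KKT_def by auto
    have LS: "L \<in> Sym" using LP unfolding PSD_def by auto
    have ap: "\<alpha> c (x, L) > 0" using b[OF cpos GP LS] .
    have ab: "\<alpha> c (x, L) * \<beta> c (x, L) = 1" using c[OF K cpos] .
    then have bp: "\<beta> c (x, L) > 0" using ap by (metis zero_less_mult_pos zero_less_one)
    have o: "G x \<bullet> (\<beta> c (x, L) *\<^sub>R L) = 0"
      using jordan_inner[OF jo LS Gsym[of x]] by (simp add: inner_commute)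
    have "phi (G x) (\<beta> c (x, L) *\<^sub>R L) = 0"
      unfolding phi_def using proj_half[OF GP psd_scale[OF LP] o] bp
      by (simp add: power2_eq_square)
    moreover have "\<gamma> (x, L) = 0" using d[OF K] by simp
    ultimately show ?thesis by (simp add: Aug_def)
  qed
  obtain p where p: "p \<in> G_NLP f G (\<alpha> c) (\<beta> c) \<gamma>" using ne2[OF cpos] by blast
  obtain x L where pxL: "p = (x, L)" by fastforce
  have ptG: "(x, L) \<in> tG_NSDP f G" using p sub pxL by auto
  have rev: "tG_NSDP f G \<subseteq> G_NLP f G (\<alpha> c) (\<beta> c) \<gamma>"
  proof
    fix q assume q: "q \<in> tG_NSDP f G"
    obtain y M where qyM: "q = (y, M)" by fastforce
    have yM: "y \<in> G_NSDP f G" "KKT f G y M" using q qyM by (auto simp: tG_NSDP_def)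
    have xL: "x \<in> G_NSDP f G" "KKT f G x L" using ptG by (auto simp: tG_NSDP_def)
    have "f y = f x" using yM(1) xL(1) unfolding G_NSDP_def by (auto intro: order_antisym)
    then have eq: "Aug f G (\<alpha> c) (\<beta> c) \<gamma> (y, M) = Aug f G (\<alpha> c) (\<beta> c) \<gamma> (x, L)"
      using val[OF yM(2)] val[OF xL(2)] by simp
    have MS: "M \<in> Sym" using yM(2) unfolding KKT_def PSD_def by auto
    have "(y, M) \<in> Dom" using MS by (simp add: Dom_def)
    then show "q \<in> G_NLP f G (\<alpha> c) (\<beta> c) \<gamma>"
      using p pxL eq qyM unfolding G_NLP_def by auto
  qed
  show "G_NLP f G (\<alpha> c) (\<beta> c) \<gamma> = tG_NSDP f G" using sub rev by blast
qed

end
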